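(* Under the standing assumptions, $\sum_{n\eta_1\le S\le n\eta_2}\Phi(S)=o(1)$ as $n\to\infty$, the sum being over integers $S$.
   Context: Parameters: integer $k\ge2$, constants $\alpha>0$, $r>0$, $0<p<1$; $d=n^{\alpha}$ (treated as an integer), $m=n\ln d$, $\tau=\frac1{1-p}$, $r_{cr}=\frac1{\ln\tau}$. Standing assumptions: $(2k-1)\alpha>1$, $k\alpha\le1$, $k\ge\frac{\tau\ln\tau}{\tau-1}$, and $r<r_{cr}$. Notation: $f(s)=1+\frac{p}{1-p}\cdot\frac{s^k-d^{-k}}{1-d^{-k}}$ for $s\in[0,1]$; $B(S)=\binom{n}{S}\left(\frac1d\right)^{S}\left(1-\frac1d\right)^{n-S}$; $W(S)=f(S/n)^{rm}$; $\Phi(S)=B(S)W(S)$. Let $\lambda>0$ be a fixed constant and $\eta_1=\frac1d+\frac{\lambda}{n^{1-(k-1)\alpha}\ln d}$. Let $\alpha_0=\frac{(2k-1)\alpha-1}{2(k-1)}$, and let $\eta_2,\eta_3,\mu$ be constants with $0<\eta_2<\eta_3<1$, $\alpha_0/\alpha-\mu\eta_2^{k-1}>0$, $\mu>\frac{kpr}{1-p}$, and $r\ln(1-p)+\eta_3>0$. *)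

theory Defs
  imports "HOL-Analysis.Analysis"
begin

definition dd :: "real \<Rightarrow> nat \<Rightarrow> real" where
  "dd \<alpha> n = real n powr \<alpha>"

definition mm :: "real \<Rightarrow> nat \<Rightarrow> real" where
  "mm \<alpha> n = real n * ln (dd \<alpha> n)"

definition tau :: "real \<Rightarrow> real" where
  "tau p = 1 / (1 - p)"

definition ff :: "nat \<Rightarrow> real \<Rightarrow> real \<Rightarrow> real \<Rightarrow> real" where
  "ff k p d s = 1 + p / (1 - p) * ((s ^ k - (1 / d) ^ k) / (1 - (1 / d) ^ k))"

definition BB :: "nat \<Rightarrow> real \<Rightarrow> nat \<Rightarrow> real" where
  "BB n d S = real (n choose S) * (1 / d) ^ S * (1 - 1 / d) ^ (n - S)"

definition WW :: "nat \<Rightarrow> real \<Rightarrow> real \<Rightarrow> real \<Rightarrow> nat \<Rightarrow> nat \<Rightarrow> real" where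
  "WW k \<alpha> r p n S = ff k p (dd \<alpha> n) (real S / real n) powr (r * mm \<alpha> n)"

definition Phi :: "nat \<Rightarrow> real \<Rightarrow> real \<Rightarrow> real \<Rightarrow> nat \<Rightarrow> nat \<Rightarrow> real" where
  "Phi k \<alpha> r p n S = BB n (dd \<alpha> n) S * WW k \<alpha> r p n S"

definition eta1 :: "nat \<Rightarrow> real \<Rightarrow> real \<Rightarrow> nat \<Rightarrow> real" where
  "eta1 k \<alpha> lam n = 1 / dd \<alpha> n + lam / (real n powr (1 - (real k - 1) * \<alpha>) * ln (dd \<alpha> n))"

end

theory Submission
  imports Defs "HOL-Real_Asymp.Real_Asymp"
begin


lemma binom_term_le1:
  fixes s :: real assumes "0 \<le> s" "s \<le> 1" "S \<le> n"
  shows "real (n choose S) * s^S * (1-s)^(n-S) \<le> 1"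
proof -
  have "(\<Sum>i\<le>n. real (n choose i) * s^i * (1-s)^(n-i)) = (s + (1-s))^n"
    by (rule binomial_ring[of s "1-s" n, symmetric])
  hence eq: "(\<Sum>i\<le>n. real (n choose i) * s^i * (1-s)^(n-i)) = 1" by simp
  have "real (n choose S) * s^S * (1-s)^(n-S) \<le> (\<Sum>i\<le>n. real (n choose i) * s^i * (1-s)^(n-i))"
    by (rule member_le_sum) (use assms in auto)
  with eq show ?thesis by simp
qed

lemma B_bound:
  fixes n S :: nat and q s :: real
  assumes n: "n > 0" and q: "0 < q" "q < 1" and s: "0 < s" "s < 1" and sdef: "s = real S / real n"
  shows "real (n choose S) * q^S * (1-q)^(n-S) \<le> exp (-(real n*q) * ((s/q)*ln(s/q) - s/q + 1))"
proof -
  have Sn: "real S = real n * s" using sdef n by simp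
  have "real S < real n" using Sn s n by (simp add: mult_less_cancel_left1)
  hence SleN: "S \<le> n" by simp
  have nS: "real (n - S) = real n * (1 - s)" using SleN Sn by (simp add: algebra_simps of_nat_diff)
  have eq: "real (n choose S) * q^S * (1-q)^(n-S) =
      (real (n choose S) * s^S * (1-s)^(n-S)) * ((q/s)^S * ((1-q)/(1-s))^(n-S))"
    using s by (simp add: power_divide field_simps)
  have nn: "0 \<le> (q/s)^S * ((1-q)/(1-s))^(n-S)" using q s by simp
  have le1: "real (n choose S) * q^S * (1-q)^(n-S) \<le> (q/s)^S * ((1-q)/(1-s))^(n-S)"
    unfolding eq by (rule mult_left_le_one_le[OF nn]) (use s SleN binom_term_le1[of s S n] in auto)
  have e1: "(q/s)^S = exp (real S * ln (q/s))"
    using q s by (simp add: exp_of_nat_mult)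
  have "(1-q)/(1-s) = 1 + (s-q)/(1-s)" using s by (simp add: field_simps)
  also have "\<dots> \<le> exp ((s-q)/(1-s))" by (rule exp_ge_add_one_self)
  finally have "((1-q)/(1-s))^(n-S) \<le> exp ((s-q)/(1-s)) ^ (n-S)"
    using q s by (intro power_mono) auto
  also have "\<dots> = exp (real (n-S) * ((s-q)/(1-s)))" by (rule exp_of_nat_mult[symmetric])
  finally have e2: "((1-q)/(1-s))^(n-S) \<le> exp (real (n-S) * ((s-q)/(1-s)))" .
  have "(q/s)^S * ((1-q)/(1-s))^(n-S) \<le> exp (real S * ln (q/s)) * exp (real (n-S) * ((s-q)/(1-s)))"
    unfolding e1 by (rule mult_left_mono[OF e2]) simp
  also have "\<dots> = exp (real S * ln (q/s) + real (n-S) * ((s-q)/(1-s)))" by (simp add: exp_add)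
  also have "real S * ln (q/s) + real (n-S) * ((s-q)/(1-s)) = -(real n*q) * ((s/q)*ln(s/q) - s/q + 1)"
  proof -
    have l: "ln (q/s) = - ln (s/q)" using q s by (simp add: ln_div)
    show ?thesis unfolding Sn nS l using q s by (simp add: field_simps)
  qed
  finally show ?thesis using le1 by linarith
qed

lemma W_bound:
  fixes f c :: real assumes "f > 0" "c \<ge> 0"
  shows "f powr c \<le> exp (c * (f - 1))"
proof -
  have "f powr c = exp (c * ln f)" using assms by (simp add: powr_def)
  also have "\<dots> \<le> exp (c * (f - 1))"
    using assms ln_le_minus_one[of f] by (simp add: mult_left_mono)
  finally show ?thesis .
qed

lemma tangent_phi:
  fixes a u :: real assumes "a > 0" "u > 0"
  shows "u*ln u - u \<ge> a*ln a - a + ln a*(u-a)"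
proof -
  have "ln (a/u) \<le> a/u - 1" using assms by (intro ln_le_minus_one) simp
  hence "ln u - ln a \<ge> 1 - a/u" using assms by (simp add: ln_div)
  hence "u * (ln u - ln a) \<ge> u * (1 - a/u)" using assms by (intro mult_left_mono) auto
  moreover have "u * (1 - a/u) = u - a" using assms by (simp add: field_simps)
  ultimately have "u * (ln u - ln a) \<ge> u - a" by simp
  thus ?thesis by (simp add: algebra_simps)
qed

lemma phi_nonneg:
  fixes a :: real assumes "a > 0" shows "a*ln a - a + 1 \<ge> 0"
  using tangent_phi[of 1 a] assms by simp

lemma pow_diff_bound:
  fixes u M :: real assumes "1 \<le> u" "u \<le> M"
  shows "u^k - 1 \<le> real k * M^(k-1) * (u-1)"
proof -
  have "(\<Sum>i<k. u^i) \<le> (\<Sum>i<k. M^(k-1))"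
  proof (rule sum_mono)
    fix i assume "i \<in> {..<k}"
    hence "i \<le> k - 1" by auto
    have "u^i \<le> M^i" using assms by (intro power_mono) auto
    also have "\<dots> \<le> M^(k-1)" using assms \<open>i \<le> k-1\<close> by (intro power_increasing) auto
    finally show "u^i \<le> M^(k-1)" .
  qed
  hence "(u - 1) * (\<Sum>i<k. u^i) \<le> (u-1) * (real k * M^(k-1))"
    using assms by (intro mult_left_mono) auto
  thus ?thesis by (simp add: power_diff_1_eq algebra_simps)
qed



lemma convex_pow_nonneg: "convex_on {0::real..} (\<lambda>x. x^j)"
proof (cases "even j")
  case True
  then show ?thesis using convex_power_even[of j] by (rule_tac convex_on_subset) auto
next
  case False
  then show ?thesis using convex_power_odd[of j] by auto
qed

lemma psi_bound:
  fixes A \<delta> u U2 :: real and k :: nat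
  assumes d: "0<\<delta>" "\<delta> \<le> 1/2" and u: "1+\<delta> \<le> u" "u \<le> U2" and A: "A \<ge> 0" and k: "k \<ge> 2"
    and c: "real k * A * exp 4^(k-1) \<le> \<delta>/6"
    and g2: "ln U2 - A*U2^(k-1) \<ge> 3"
  shows "u*ln u - u + 1 - A*(u^k - 1) \<ge> \<delta>^2/30"
proof (cases "u \<le> exp 4")
  case True
  define a where "a = 1 + \<delta>/2"
  have a0: "a > 0" using d by (simp add: a_def)
  have t: "u*ln u - u \<ge> a*ln a - a + ln a*(u-a)" using tangent_phi[of a u] a0 u d by simp
  have pn: "a*ln a - a + 1 \<ge> 0" using phi_nonneg[OF a0] .
  have "ln a \<ge> (\<delta>/2)/(1+\<delta>/2)" unfolding a_def using ln_add1_ge[of "\<delta>/2"] d by (simp add: add.commute)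
  moreover have "(\<delta>/2)/(1+\<delta>/2) \<ge> 2*\<delta>/5" using d by (simp add: field_simps)
  ultimately have la: "ln a \<ge> 2*\<delta>/5" by linarith
  have ua: "u - a \<ge> 0" using u d by (simp add: a_def)
  have l1: "ln a*(u-a) \<ge> (2*\<delta>/5)*(u-a)" using la ua by (rule mult_right_mono)
  have "u^k - 1 \<le> real k * exp 4^(k-1) * (u-1)" using pow_diff_bound[of u "exp 4" k] u d True by simp
  hence "A*(u^k - 1) \<le> A*(real k * exp 4^(k-1) * (u-1))" using A by (rule mult_left_mono)
  also have "\<dots> = (real k * A * exp 4^(k-1)) * (u-1)" by simp
  also have "\<dots> \<le> (\<delta>/6)*(u-1)" using c u d by (intro mult_right_mono) auto
  finally have l2: "A*(u^k - 1) \<le> (\<delta>/6)*(u-1)" .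
  have "(2*\<delta>/5)*(u-a) - (\<delta>/6)*(u-1) - \<delta>^2/30 = \<delta>*(7/30)*(u-1-\<delta>)"
    unfolding a_def power2_eq_square by (simp add: field_simps)
  moreover have "\<delta>*(7/30)*(u-1-\<delta>) \<ge> 0" using d u by simp
  ultimately show ?thesis using t pn l1 l2 by linarith
next
  case False
  define M :: real where "M = exp 4"
  have M: "M \<le> u" "M > 0" using False by (auto simp: M_def)
  define g where "g = (\<lambda>x::real. ln x - A * x^(k-1))"
  have cl: "concave_on {M..U2} ln"
    using ln_concave M unfolding concave_on_def by (rule_tac convex_on_subset) auto
  have cp: "convex_on {M..U2} (\<lambda>x. A * x^(k-1))"
    using convex_pow_nonneg[of "k-1"] M A by (intro convex_on_cmul) (auto intro: convex_on_subset)
  have cg: "concave_on {M..U2} g" unfolding g_def using cl cp by (rule concave_on_diff)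
  have "g u \<ge> min (g M) (g U2)" using concave_on_ge_min[OF cg] M u by auto
  moreover have "g U2 \<ge> 3" using g2 by (simp add: g_def)
  moreover have "g M \<ge> 3"
  proof -
    have "A * M^(k-1) \<le> real k * A * M^(k-1)" using k A M by (simp add: mult_right_mono mult_le_cancel_right1)
    also have "\<dots> \<le> 1" using c d by (simp add: M_def)
    finally show ?thesis by (simp add: g_def M_def)
  qed
  ultimately have gu: "g u \<ge> 3" by linarith
  have uk: "u^k = u * u^(k-1)" using k by (cases k) auto
  have "u*ln u - u + 1 - A*(u^k - 1) \<ge> u * (g u - 1)"
    unfolding g_def uk using A by (simp add: algebra_simps)
  moreover have "u * (g u - 1) \<ge> u * 2" using gu M by (intro mult_left_mono) auto
  moreover have "u * 2 \<ge> \<delta>^2/30"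
  proof -
    have "\<delta>*\<delta> \<le> 1" using d by (intro mult_le_one) auto
    thus ?thesis using u d by (simp add: power2_eq_square)
  qed
  ultimately show ?thesis by linarith
qed


lemma core:
  fixes n S k :: nat and d p r \<delta> \<eta>2 :: real
  assumes n: "n>0" and d: "d \<ge> 2" and p: "0<p" "p<1" and r: "r>0" and k: "k\<ge>2"
    and sl: "(1+\<delta>)/d \<le> real S / real n" and su: "real S / real n \<le> \<eta>2" and e2: "\<eta>2 < 1"
    and dl: "0<\<delta>" "\<delta> \<le> 1/2"
    and c: "real k * (r * (p/(1-p)/(1-(1/d)^k)) * ln d * (1/d)^(k-1)) * exp 4^(k-1) \<le> \<delta>/6"
    and g2: "ln (\<eta>2*d) - (r * (p/(1-p)/(1-(1/d)^k)) * ln d * (1/d)^(k-1))*(\<eta>2*d)^(k-1) \<ge> 3"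
  shows "BB n d S * ff k p d (real S / real n) powr (r*(real n * ln d)) \<le> exp(-(real n/d)*(\<delta>^2/30))"
proof -
  define s where "s = real S / real n"
  define q where "q = 1/d"
  define A where "A = r * (p/(1-p)/(1-(1/d)^k)) * ln d * (1/d)^(k-1)"
  define u where "u = s/q"
  have q: "0 < q" "q \<le> 1/2" using d by (auto simp: q_def)
  have s0: "s \<ge> (1+\<delta>)*q" using sl by (simp add: s_def q_def)
  have spos: "s > 0" using s0 q dl by (smt (verit) mult_pos_pos)
  have s1: "s < 1" using su e2 by (simp add: s_def)
  have ud: "u = s*d" using d by (simp add: u_def q_def)
  have u1: "1 + \<delta> \<le> u" using s0 q by (simp add: u_def field_simps)
  have u2: "u \<le> \<eta>2*d" unfolding ud s_def using mult_right_mono[OF su, of d] d by simp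
  have qk: "q^k \<le> 1/2"
  proof -
    have "q^k \<le> q^1" using q k by (intro power_decreasing) auto
    thus ?thesis using q by simp
  qed
  have qk0: "0 < 1 - q^k" using qk by simp
  have A0: "A \<ge> 0" using p r d qk0 by (simp add: A_def q_def)
  have psi: "u*ln u - u + 1 - A*(u^k - 1) \<ge> \<delta>^2/30"
    using psi_bound[OF dl u1 u2 A0 k] c g2 by (simp add: A_def)
  have Bb: "BB n d S \<le> exp (-(real n*q) * (u*ln u - u + 1))"
  proof -
    have "BB n d S = real (n choose S) * q^S * (1-q)^(n-S)" by (simp add: BB_def q_def)
    also have "\<dots> \<le> exp (-(real n*q) * ((s/q)*ln(s/q) - s/q + 1))"
      using B_bound[OF n q(1) _ spos s1 s_def] q by simp
    finally show ?thesis by (simp add: u_def)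
  qed
  define f where "f = ff k p d s"
  have qs: "q \<le> s" using s0 q dl by (smt (verit) mult_le_cancel_right1 mult.commute)
  have sk: "s^k \<ge> q^k" using qs q by (intro power_mono) auto
  have f1: "f \<ge> 1" using p sk qk0 by (simp add: f_def ff_def q_def)
  have Wb: "f powr (r*(real n * ln d)) \<le> exp ((r*(real n * ln d)) * (f - 1))"
    using W_bound[of f "r*(real n * ln d)"] f1 r d by simp
  have sq: "s = u * q" using q by (simp add: u_def)
  have kk: "q^k = q * q^(k-1)" using k by (cases k) auto
  have eqW: "(r*(real n * ln d)) * (f - 1) = (real n * q) * (A * (u^k - 1))"
    unfolding f_def ff_def A_def q_def[symmetric] sq power_mult_distrib kk
    using qk0 p by (simp add: field_simps)
  have Wb2: "f powr (r*(real n * ln d)) \<le> exp ((real n * q) * (A * (u^k - 1)))" using Wb unfolding eqW .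
  have "BB n d S * f powr (r*(real n * ln d)) \<le> exp (-(real n*q) * (u*ln u - u + 1)) * exp ((real n * q) * (A * (u^k - 1)))"
    using Bb Wb2 by (intro mult_mono) (auto simp: BB_def)
  also have "\<dots> = exp (-(real n*q) * (u*ln u - u + 1 - A*(u^k - 1)))"
    by (simp add: exp_add[symmetric] algebra_simps)
  also have "\<dots> \<le> exp (-(real n*q) * (\<delta>^2/30))"
    using psi n q by (simp add: mult_left_mono)
  finally show ?thesis by (simp add: f_def s_def q_def)
qed


lemma ev1: "\<alpha> > 0 \<Longrightarrow> eventually (\<lambda>n::nat. 2 \<le> real n powr \<alpha>) sequentially"
  by real_asymp
lemma ev2: "\<alpha> > 0 \<Longrightarrow> lam > 0 \<Longrightarrow> eventually (\<lambda>n::nat. lam / (\<alpha> * ln (real n)) \<le> 1/2) sequentially"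
  by real_asymp
lemma ev3: "\<beta> > 0 \<Longrightarrow> lam > 0 \<Longrightarrow> eventually (\<lambda>n::nat. K * ln (real n)^2 \<le> lam * real n powr \<beta>) sequentially"
  by real_asymp
lemma ev4: "\<gamma> > 0 \<Longrightarrow> \<alpha> > 0 \<Longrightarrow> eventually (\<lambda>n::nat. 3 \<le> \<gamma> * (\<alpha> * ln (real n)) + c) sequentially"
  by real_asymp
lemma lim1: "\<beta> > 0 \<Longrightarrow> c > 0 \<Longrightarrow> (\<lambda>n::nat. (real n + 1) * exp (- (c * (real n powr \<beta> / (ln (real n))^2)))) \<longlonglongrightarrow> 0"
  by real_asymp

lemma per_n:
  fixes k n :: nat and \<alpha> r p lam \<eta>2 c0 \<beta> K :: real
  assumes k: "k \<ge> 2" and a: "\<alpha> > 0" and r: "r > 0" and p: "0 < p" "p < 1" and lam: "lam > 0"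
    and e2: "0 < \<eta>2" "\<eta>2 < 1" and ka: "real k * \<alpha> \<le> 1"
    and bdef: "\<beta> = (2 * real k - 1) * \<alpha> - 1"
    and c0def: "c0 = r*p/(1-p) * \<eta>2^(k-1)"
    and Kdef: "K = 12 * real k * exp 4^(k-1) * r * p/(1-p) * \<alpha>^2"
    and n2: "n \<ge> 2" and C1: "2 \<le> real n powr \<alpha>" and C2: "lam / (\<alpha> * ln (real n)) \<le> 1/2"
    and C3: "K * ln (real n)^2 \<le> lam * real n powr \<beta>"
    and C4: "3 \<le> (1 - 2*c0) * (\<alpha> * ln (real n)) + ln \<eta>2"
    and S: "real n * eta1 k \<alpha> lam n \<le> real S" "real S \<le> real n * \<eta>2"
  shows "Phi k \<alpha> r p n S \<le> exp (- (lam^2/(30*\<alpha>^2) * (real n powr \<beta> / ln(real n)^2)))"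
proof -
  define x where "x = real n"
  have x: "x \<ge> 2" using n2 by (simp add: x_def)
  define d where "d = dd \<alpha> n"
  have dx: "d = x powr \<alpha>" by (simp add: d_def dd_def x_def)
  have d2: "d \<ge> 2" using C1 by (simp add: dx x_def)
  define t where "t = ln x"
  have t: "t > 0" using x by (simp add: t_def)
  have L: "ln d = \<alpha> * t" using x by (simp add: dx t_def ln_powr)
  define \<delta> where "\<delta> = lam * d / (x powr (1 - (real k - 1) * \<alpha>) * ln d)"
  define P where "P = x powr (real k * \<alpha> - 1)"
  have P0: "P > 0" using x by (simp add: P_def)
  have "d / x powr (1 - (real k - 1) * \<alpha>) = P"
    unfolding dx P_def by (simp add: powr_diff[symmetric] algebra_simps)
  moreover have "\<delta> = lam * (d / x powr (1 - (real k - 1) * \<alpha>)) / ln d"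
    unfolding \<delta>_def by simp
  ultimately have dP: "\<delta> = lam * P / (\<alpha> * t)" unfolding L by simp
  have d0: "\<delta> > 0" using dP lam P0 a t by simp
  have P1: "P \<le> 1"
  proof -
    have "P \<le> x powr 0" unfolding P_def using x ka by (intro powr_mono) auto
    thus ?thesis using x by simp
  qed
  have "\<delta> \<le> lam / (\<alpha> * t)" unfolding dP using P1 lam a t by (simp add: divide_right_mono)
  hence d12: "\<delta> \<le> 1/2" using C2 unfolding t_def x_def by linarith
  have eta: "eta1 k \<alpha> lam n = (1+\<delta>)/d"
    unfolding eta1_def \<delta>_def d_def[symmetric] x_def[symmetric] using d2 by (simp add: field_simps)
  define Q where "Q = (1/d)^(k-1)"
  have Q0: "Q > 0" using d2 by (simp add: Q_def)
  have Qd: "Q * d^(k-1) = 1" using d2 by (simp add: Q_def power_one_over)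
  have Qx: "Q = x powr (-((real k - 1) * \<alpha>))"
  proof -
    have "d^(k-1) = x powr ((real k - 1) * \<alpha>)" unfolding dx using x k
      by (simp add: powr_power of_nat_diff)
    hence "Q * x powr ((real k - 1) * \<alpha>) = 1" using Qd by simp
    hence "Q = 1 / x powr ((real k - 1) * \<alpha>)" using x by (simp add: eq_divide_eq)
    thus ?thesis by (simp only: powr_minus_divide)
  qed
  have PQ: "P = x powr \<beta> * Q"
    unfolding P_def Qx bdef using x by (simp add: powr_add[symmetric] algebra_simps)
  define a where "a = p/(1-p)/(1-(1/d)^k)"
  have qk: "(1/d)^k \<le> 1/2"
  proof -
    have "(1/d)^k \<le> (1/d)^1" using d2 k by (intro power_decreasing) auto
    moreover have "1/d \<le> 1/2" using d2 by (simp add: field_simps)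
    ultimately show ?thesis by simp
  qed
  have a0: "a \<ge> 0" using p qk by (simp add: a_def)
  have a2: "a \<le> 2*p/(1-p)"
  proof -
    have "p/(1-p)/(1-(1/d)^k) \<le> p/(1-p)/(1/2)" using p qk
      by (intro divide_left_mono) auto
    thus ?thesis by (simp add: a_def mult.commute)
  qed
  define A where "A = r * a * ln d * Q"
  have Ale: "A \<le> r * (2*p/(1-p)) * (\<alpha>*t) * Q"
    unfolding A_def L using a2 r a t Q0 by (intro mult_right_mono mult_left_mono) auto
  have cc: "real k * A * exp 4^(k-1) \<le> \<delta>/6"
  proof -
    have "real k * A * exp 4^(k-1) \<le> real k * (r * (2*p/(1-p)) * (\<alpha>*t) * Q) * exp 4^(k-1)"
      using Ale by (intro mult_right_mono mult_left_mono) auto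
    also have "\<dots> = (K * t^2) * (Q/(6*\<alpha>*t))" unfolding Kdef using a t
      by (simp add: field_simps power2_eq_square)
    also have "\<dots> \<le> (lam * x powr \<beta>) * (Q/(6*\<alpha>*t))"
      using C3 Q0 a t by (intro mult_right_mono) (auto simp: t_def x_def)
    also have "\<dots> = \<delta>/6" unfolding dP PQ by (simp add: field_simps)
    finally show ?thesis .
  qed
  have g2: "ln (\<eta>2*d) - A*(\<eta>2*d)^(k-1) \<ge> 3"
  proof -
    have "A*(\<eta>2*d)^(k-1) = r * a * \<eta>2^(k-1) * ln d * (Q * d^(k-1))"
      by (simp add: A_def power_mult_distrib)
    also have "\<dots> = r * a * \<eta>2^(k-1) * ln d" using Qd by simp
    also have "\<dots> \<le> 2 * c0 * ln d"
    proof -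
      have "r * a * \<eta>2^(k-1) \<le> r * (2*p/(1-p)) * \<eta>2^(k-1)"
        using a2 r e2 by (intro mult_right_mono mult_left_mono) auto
      moreover have "ln d \<ge> 0" using d2 by simp
      moreover have "r * (2*p/(1-p)) * \<eta>2^(k-1) = 2 * c0" unfolding c0def by simp
      ultimately show ?thesis by (metis mult_right_mono)
    qed
    finally have "A*(\<eta>2*d)^(k-1) \<le> 2 * c0 * ln d" .
    moreover have "ln (\<eta>2*d) = ln \<eta>2 + ln d" using e2 d2 by (simp add: ln_mult)
    ultimately show ?thesis using C4 L by (simp add: t_def x_def algebra_simps)
  qed
  have xpos: "n > 0" using n2 by simp
  have s1: "(1+\<delta>)/d \<le> real S / real n" using S(1) xpos unfolding eta by (simp add: field_simps)
  have s2: "real S / real n \<le> \<eta>2" using S(2) xpos by (simp add: field_simps)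
  have main: "BB n d S * ff k p d (real S / real n) powr (r*(real n * ln d)) \<le> exp(-(real n/d)*(\<delta>^2/30))"
    using core[OF xpos d2 p r k s1 s2 e2(2) d0 d12] cc g2 unfolding A_def a_def Q_def by simp
  have ph: "Phi k \<alpha> r p n S = BB n d S * ff k p d (real S / real n) powr (r*(real n * ln d))"
    by (simp add: Phi_def WW_def mm_def d_def)
  have "(real n/d)*(\<delta>^2/30) = lam^2/(30*\<alpha>^2) * (real n powr \<beta> / ln(real n)^2)"
  proof -
    have "x / d * P^2 = x powr \<beta>"
    proof -
      have xd: "x / d = x powr (1 - \<alpha>)" unfolding dx using x by (simp add: powr_diff)
      have "x / d * P^2 = x powr ((1-\<alpha>) + (real k * \<alpha> - 1) + (real k * \<alpha> - 1))"
        unfolding P_def xd power2_eq_square powr_add by (simp only: mult.assoc)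
      also have "(1-\<alpha>) + (real k * \<alpha> - 1) + (real k * \<alpha> - 1) = \<beta>" unfolding bdef by (simp add: algebra_simps)
      finally show ?thesis .
    qed
    thus ?thesis unfolding dP x_def[symmetric] t_def[symmetric] using a t d2
      by (simp add: field_simps power2_eq_square)
  qed
  thus ?thesis using main ph by simp
qed


theorem lemma4p7:
  fixes k :: nat and \<alpha> r p lam \<eta>2 \<eta>3 \<mu> :: real
  assumes "k \<ge> 2" and "\<alpha> > 0" and "r > 0" and "0 < p" and "p < 1"
    and "(2 * real k - 1) * \<alpha> > 1" and "real k * \<alpha> \<le> 1"
    and "real k \<ge> tau p * ln (tau p) / (tau p - 1)"
    and "r < 1 / ln (tau p)"
    and "lam > 0"
    and "0 < \<eta>2" and "\<eta>2 < \<eta>3" and "\<eta>3 < 1"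
    and "((2 * real k - 1) * \<alpha> - 1) / (2 * (real k - 1)) / \<alpha> - \<mu> * \<eta>2 ^ (k - 1) > 0"
    and "\<mu> > real k * p * r / (1 - p)"
    and "r * ln (1 - p) + \<eta>3 > 0"
  shows "(\<lambda>n. \<Sum>S\<in>{S::nat. real n * eta1 k \<alpha> lam n \<le> real S \<and> real S \<le> real n * \<eta>2}.
            Phi k \<alpha> r p n S) \<longlonglongrightarrow> 0"
proof -
  note k = assms(1) and a = assms(2) and r = assms(3) and p = assms(4,5) and b1 = assms(6)
    and ka = assms(7) and lam = assms(10) and e2 = assms(11) and e23 = assms(12,13)
    and hmu = assms(14) and mu = assms(15)
  have e2': "\<eta>2 < 1" using e23 by simp
  define \<beta> where "\<beta> = (2 * real k - 1) * \<alpha> - 1"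
  have b: "\<beta> > 0" using b1 by (simp add: \<beta>_def)
  have a12: "\<alpha> \<le> 1/2"
  proof -
    have "2 * \<alpha> \<le> real k * \<alpha>" using k a by (intro mult_right_mono) auto
    thus ?thesis using ka by simp
  qed
  define c0 where "c0 = r*p/(1-p) * \<eta>2^(k-1)"
  have c0: "c0 < 1/2"
  proof -
    have ep: "\<eta>2^(k-1) > 0" using e2 by simp
    have "real k * c0 = (real k * p * r / (1 - p)) * \<eta>2^(k-1)" by (simp add: c0_def field_simps)
    also have "\<dots> < \<mu> * \<eta>2^(k-1)" using mu ep by (rule mult_strict_right_mono)
    also have "\<dots> < \<beta> / (2 * (real k - 1)) / \<alpha>" using hmu by (simp add: \<beta>_def)
    also have "\<dots> \<le> 1"
    proof -
      have "\<beta> \<le> 2 * (real k - 1) * \<alpha>" using a12 by (simp add: \<beta>_def algebra_simps)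
      moreover have "2 * (real k - 1) * \<alpha> > 0" using k a by simp
      ultimately show ?thesis using k a by (simp add: field_simps)
    qed
    finally have "real k * c0 < 1" .
    moreover have "c0 \<ge> 0" using r p e2 by (simp add: c0_def)
    moreover have "2 * c0 \<le> real k * c0" using k \<open>c0 \<ge> 0\<close> by (intro mult_right_mono) auto
    ultimately have "2 * c0 < 1" by linarith
    thus ?thesis by simp
  qed
  define K where "K = 12 * real k * exp 4^(k-1) * r * p/(1-p) * \<alpha>^2"
  define T where "T = (\<lambda>n::nat. {S::nat. real n * eta1 k \<alpha> lam n \<le> real S \<and> real S \<le> real n * \<eta>2})"
  define E where "E = (\<lambda>n::nat. lam^2/(30*\<alpha>^2) * (real n powr \<beta> / ln(real n)^2))"
  have ev: "eventually (\<lambda>n::nat. n \<ge> 2 \<and> 2 \<le> real n powr \<alpha> \<and> lam / (\<alpha> * ln (real n)) \<le> 1/2 \<and>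
      K * ln (real n)^2 \<le> lam * real n powr \<beta> \<and> 3 \<le> (1 - 2*c0) * (\<alpha> * ln (real n)) + ln \<eta>2) sequentially"
    by (intro eventually_conj eventually_ge_at_top ev1[OF a] ev2[OF a lam] ev3[OF b lam] ev4) (use c0 a in auto)
  have evb: "eventually (\<lambda>n. norm (\<Sum>S\<in>T n. Phi k \<alpha> r p n S) \<le> (real n + 1) * exp (- E n)) sequentially"
    using ev
  proof (rule eventually_mono)
    fix n :: nat
    assume h: "n \<ge> 2 \<and> 2 \<le> real n powr \<alpha> \<and> lam / (\<alpha> * ln (real n)) \<le> 1/2 \<and>
      K * ln (real n)^2 \<le> lam * real n powr \<beta> \<and> 3 \<le> (1 - 2*c0) * (\<alpha> * ln (real n)) + ln \<eta>2"
    have bnd: "Phi k \<alpha> r p n S \<le> exp (- E n)" if "S \<in> T n" for S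
      using per_n[OF k a r p lam e2 e2' ka \<beta>_def c0_def K_def] h that by (simp add: T_def E_def)
    have nn: "Phi k \<alpha> r p n S \<ge> 0" for S
    proof -
      have "dd \<alpha> n \<ge> 2" using h by (simp add: dd_def)
      hence "1 - 1 / dd \<alpha> n \<ge> 0" "1 / dd \<alpha> n \<ge> 0" by (simp_all add: field_simps)
      thus ?thesis unfolding Phi_def BB_def WW_def by (intro mult_nonneg_nonneg zero_le_power powr_ge_zero) auto
    qed
    have sub: "T n \<subseteq> {..n}"
    proof
      fix S assume "S \<in> T n"
      hence "real S \<le> real n * \<eta>2" by (simp add: T_def)
      also have "\<dots> \<le> real n" using e2' by (simp add: mult_left_le)
      finally show "S \<in> {..n}" by simp
    qed
    have fin: "finite (T n)" using sub finite_subset by blast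
    have card: "card (T n) \<le> n + 1" using card_mono[OF _ sub] by simp
    have "(\<Sum>S\<in>T n. Phi k \<alpha> r p n S) \<le> real (card (T n)) * exp (- E n)"
      using bnd by (rule sum_bounded_above)
    also have "\<dots> \<le> (real n + 1) * exp (- E n)" using card by (intro mult_right_mono) auto
    finally have "(\<Sum>S\<in>T n. Phi k \<alpha> r p n S) \<le> (real n + 1) * exp (- E n)" .
    moreover have "(\<Sum>S\<in>T n. Phi k \<alpha> r p n S) \<ge> 0" using nn by (simp add: sum_nonneg)
    ultimately show "norm (\<Sum>S\<in>T n. Phi k \<alpha> r p n S) \<le> (real n + 1) * exp (- E n)" by simp
  qed
  have lim: "(\<lambda>n::nat. (real n + 1) * exp (- E n)) \<longlonglongrightarrow> 0"
    unfolding E_def using lim1[OF b, of "lam^2/(30*\<alpha>^2)"] lam a by simp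
  have "(\<lambda>n. \<Sum>S\<in>T n. Phi k \<alpha> r p n S) \<longlonglongrightarrow> 0"
    by (rule Lim_null_comparison[OF evb lim])
  thus ?thesis by (simp add: T_def)
qed

end
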